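(* Let $I\subset\mathbb{R}$ be an open interval and let $\mathcal{L}:(0,\infty)\times I\to\mathbb{R}$, $(X,\phi)\mapsto\mathcal{L}(X,\phi)$, be a smooth function with $\mathcal{L}_X\neq 0$ everywhere. Define $p=\mathcal{L}$ and $\rho=2X\mathcal{L}_X-\mathcal{L}$, regarded as functions of the two independent variables $(X,\phi)$. Then the following are equivalent: (i) (isentropy) there exists a smooth nowhere-vanishing function $n:(0,\infty)\times I\to\mathbb{R}$ such that the Gibbs relation with $\mathrm{d}(s/n)=0$, namely $$\mathrm{d}\!\left(\frac{\rho+p}{n}\right)=\frac{1}{n}\,\mathrm{d}p \quad\Longleftrightarrow\quad \mathrm{d}\rho-(\rho+p)\frac{\mathrm{d}n}{n}=0,$$ holds identically as an equality of differential $1$-forms in $(X,\phi)$, i.e. $\rho_X=(\rho+p)\,n_X/n$ and $\rho_\phi=(\rho+p)\,n_\phi/n$; (ii) there exist a smooth function $f:I\to\mathbb{R}$ and a smooth function $G:(0,\infty)\to\mathbb{R}$ such that $\mathcal{L}(X,\phi)=G(\tilde X)$ with $\tilde X=e^{-2f(\phi)}X$; equivalently, after the field redefinition $\tilde\phi$ defined by $\tilde\phi_{,\mu}=e^{-f(\phi)}\phi_{,\mu}$ (so that $\tilde X=\tfrac12 g^{\mu\nu}\tilde\phi_{,\mu}\tilde\phi_{,\nu}$), the Lagrangian depends only on the kinetic term $\tilde X$ and not explicitly on $\tilde\phi$. Moreover, in this case $n$ is necessarily of the form $n=e^{f(\phi)}\sqrt{2X}\,\mathcal{L}_X$ (for $f$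 as in (ii), up to sign), and $-\mathcal{L}_\phi=2X\mathcal{L}_X f'(\phi)$; in terms of $\tilde X$ one has $n=\sqrt{2\tilde X}\,G'(\tilde X)$.
   Context: A scalar field $\phi$ on a spacetime with metric $g_{\mu\nu}$ of signature $(+,-,-,-)$ has action $S=\int\mathcal{L}(X,\phi)\sqrt{-g}\,\mathrm{d}^4x$ with kinetic term $X=\tfrac12 g^{\mu\nu}\phi_{,\mu}\phi_{,\nu}>0$; subscripts $X,\phi$ denote partial derivatives. Its stress tensor $T_{\mu\nu}=\mathcal{L}_X\phi_{,\mu}\phi_{,\nu}-\mathcal{L}g_{\mu\nu}$ is that of a perfect fluid with pressure $p=\mathcal{L}$, energy density $\rho=2X\mathcal{L}_X-\mathcal{L}$ and four-velocity $u_\mu=\phi_{,\mu}/\sqrt{2X}$. Thermodynamically, $n$ denotes the particle number density, $s$ the entropy density, and Gibbs' relation reads $\mathrm{d}((\rho+p)/n)=T\,\mathrm{d}(s/n)+\mathrm{d}p/n$; the flow is called isentropic when $\mathrm{d}(s/n)=0$. *)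

theory Defs
  imports "HOL-Analysis.Analysis"
begin

definition pX :: "(real \<times> real \<Rightarrow> real) \<Rightarrow> real \<times> real \<Rightarrow> real" where
  "pX F z = deriv (\<lambda>t. F (t, snd z)) (fst z)"

definition pPhi :: "(real \<times> real \<Rightarrow> real) \<Rightarrow> real \<times> real \<Rightarrow> real" where
  "pPhi F z = deriv (\<lambda>t. F (fst z, t)) (snd z)"

fun iter_pd :: "bool list \<Rightarrow> (real \<times> real \<Rightarrow> real) \<Rightarrow> real \<times> real \<Rightarrow> real" where
  "iter_pd [] F = F"
| "iter_pd (d # ds) F = (if d then pX (iter_pd ds F) else pPhi (iter_pd ds F))"

definition smooth2_on :: "(real \<times> real) set \<Rightarrow> (real \<times> real \<Rightarrow> real) \<Rightarrow> bool" where
  "smooth2_on S F \<longleftrightarrow>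
     (\<forall>ds. continuous_on S (iter_pd ds F) \<and> (\<forall>z\<in>S. iter_pd ds F differentiable (at z)))"

definition smooth1_on :: "real set \<Rightarrow> (real \<Rightarrow> real) \<Rightarrow> bool" where
  "smooth1_on S g \<longleftrightarrow> (\<forall>k. \<forall>x\<in>S. ((deriv ^^ k) g) differentiable (at x))"

definition isentropic_n ::
  "real set \<Rightarrow> (real \<times> real \<Rightarrow> real) \<Rightarrow> (real \<times> real \<Rightarrow> real) \<Rightarrow> bool" where
  "isentropic_n I L n \<longleftrightarrow>
     (let D = {0<..} \<times> I; p = L; \<rho> = (\<lambda>z. 2 * fst z * pX L z - L z) in
      smooth2_on D n \<and> (\<forall>z\<in>D. n z \<noteq> 0) \<and>
      (\<forall>z\<in>D. pX \<rho> z = (\<rho> z + p z) * pX n z / n z \<and>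
              pPhi \<rho> z = (\<rho> z + p z) * pPhi n z / n z))"

definition field_redef ::
  "real set \<Rightarrow> (real \<times> real \<Rightarrow> real) \<Rightarrow> (real \<Rightarrow> real) \<Rightarrow> (real \<Rightarrow> real) \<Rightarrow> bool" where
  "field_redef I L f G \<longleftrightarrow>
     smooth1_on I f \<and> smooth1_on {0<..} G \<and>
     (\<forall>X>0. \<forall>\<phi>\<in>I. L (X, \<phi>) = G (exp (- 2 * f \<phi>) * X))"

end

theory Submission
  imports Defs
begin


coinductive sm :: "real set \<Rightarrow> (real \<Rightarrow> real) \<Rightarrow> bool" for S where
  smI: "\<forall>x\<in>S. (g has_real_derivative g' x) (at x) \<Longrightarrow> sm S g' \<Longrightarrow> sm S g"

definition dsm :: "real set \<Rightarrow> (real \<Rightarrow> real) \<Rightarrow> real \<Rightarrow> real" where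
  "dsm S g = (SOME g'. (\<forall>x\<in>S. (g has_real_derivative g' x) (at x)) \<and> sm S g')"

lemma dsm: assumes "sm S g"
  shows "\<forall>x\<in>S. (g has_real_derivative dsm S g x) (at x)" "sm S (dsm S g)"
proof -
  have "\<exists>g'. (\<forall>x\<in>S. (g has_real_derivative g' x) (at x)) \<and> sm S g'"
    using assms by (cases rule: sm.cases) auto
  from someI_ex[OF this] show "\<forall>x\<in>S. (g has_real_derivative dsm S g x) (at x)" "sm S (dsm S g)"
    unfolding dsm_def by auto
qed

lemma sm_cong:
  assumes "open S" "sm S a" "\<forall>x\<in>S. a x = b x"
  shows "sm S b"
proof -
  have "\<exists>a. sm S a \<and> (\<forall>x\<in>S. a x = b x)" using assms by blast
  then show ?thesis
  proof (coinduction arbitrary: b)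
    case (sm b)
    then obtain a where a: "sm S a" "\<forall>x\<in>S. a x = b x" by blast
    have "\<forall>x\<in>S. (b has_real_derivative dsm S a x) (at x)"
      using dsm(1)[OF a(1)] a(2) assms(1)
      by (metis has_field_derivative_transform_within_open)
    then show ?case using dsm(2)[OF a(1)] by blast
  qed
qed

lemma sm_const: "sm S (\<lambda>x. c)"
  apply (rule sm.coinduct[where X="\<lambda>g. \<exists>c. g = (\<lambda>x. c)"])
   apply blast
  apply (elim exE)
  subgoal for g c
    apply (rule exI[of _ g], rule exI[of _ "\<lambda>x. 0"])
    by auto
  done

definition psum :: "((real \<Rightarrow> real) \<times> (real \<Rightarrow> real)) list \<Rightarrow> real \<Rightarrow> real" where
  "psum ps x = sum_list (map (\<lambda>(a,b). a x * b x) ps)"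

definition dps :: "real set \<Rightarrow> ((real \<Rightarrow> real) \<times> (real \<Rightarrow> real)) list \<Rightarrow> ((real \<Rightarrow> real) \<times> (real \<Rightarrow> real)) list" where
  "dps S ps = concat (map (\<lambda>(a,b). [(dsm S a, b), (a, dsm S b)]) ps)"

lemma psum_deriv:
  assumes "\<forall>(a,b)\<in>set ps. sm S a \<and> sm S b" "x \<in> S"
  shows "(psum ps has_real_derivative psum (dps S ps) x) (at x)"
  using assms
proof (induction ps)
  case Nil
  then show ?case by (simp add: psum_def dps_def)
next
  case (Cons p ps)
  obtain a b where p: "p = (a,b)" by force
  have ab: "sm S a" "sm S b" using Cons.prems p by auto
  have "((\<lambda>x. a x * b x + psum ps x) has_real_derivative
      (dsm S a x * b x + a x * dsm S b x) + psum (dps S ps) x) (at x)"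
    using dsm(1)[OF ab(1)] dsm(1)[OF ab(2)] Cons
    by (auto intro!: derivative_eq_intros)
  then show ?case by (simp add: psum_def dps_def p algebra_simps)
qed

lemma dps_sm: "\<forall>(a,b)\<in>set ps. sm S a \<and> sm S b \<Longrightarrow> \<forall>(a,b)\<in>set (dps S ps). sm S a \<and> sm S b"
  by (auto simp: dps_def dsm)

lemma sm_psum: assumes "\<forall>(a,b)\<in>set ps. sm S a \<and> sm S b" shows "sm S (psum ps)"
  apply (rule sm.coinduct[where X="\<lambda>g. \<exists>ps. g = psum ps \<and> (\<forall>(a,b)\<in>set ps. sm S a \<and> sm S b)"])
  using assms apply blast
  subgoal for g
    apply (elim exE conjE)
    subgoal for qs
      apply (rule exI[of _ g], rule exI[of _ "psum (dps S qs)"])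
      using psum_deriv[of qs S] dps_sm[of qs S] by blast
    done
  done

lemma sm_mult: "sm S a \<Longrightarrow> sm S b \<Longrightarrow> sm S (\<lambda>x. a x * b x)"
  using sm_psum[of "[(a,b)]" S] by (simp add: psum_def[abs_def])

lemma sm_add: "sm S a \<Longrightarrow> sm S b \<Longrightarrow> sm S (\<lambda>x. a x + b x)"
  using sm_psum[of "[(a,\<lambda>x. 1),(b,\<lambda>x. 1)]" S] by (simp add: psum_def[abs_def] sm_const)

lemma sm_cmult: "sm S a \<Longrightarrow> sm S (\<lambda>x. c * a x)"
  using sm_mult[OF sm_const] by blast

lemma sm_diff: "sm S a \<Longrightarrow> sm S b \<Longrightarrow> sm S (\<lambda>x. a x - b x)"
  using sm_add[OF _ sm_cmult[of S b "-1"], of a] by simp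


definition cps :: "(real \<Rightarrow> real) \<Rightarrow> ((real \<Rightarrow> real) \<times> (real \<Rightarrow> real)) list \<Rightarrow> real \<Rightarrow> real" where
  "cps g ps x = sum_list (map (\<lambda>(a,b). a (g x) * b x) ps)"

definition dcps :: "real set \<Rightarrow> real set \<Rightarrow> (real \<Rightarrow> real) \<Rightarrow> ((real \<Rightarrow> real) \<times> (real \<Rightarrow> real)) list \<Rightarrow> ((real \<Rightarrow> real) \<times> (real \<Rightarrow> real)) list" where
  "dcps S T g ps = concat (map (\<lambda>(a,b). [(dsm T a, \<lambda>x. dsm S g x * b x), (a, dsm S b)]) ps)"

lemma cps_deriv:
  assumes "\<forall>(a,b)\<in>set ps. sm T a \<and> sm S b" "x \<in> S" "sm S g" "\<forall>x\<in>S. g x \<in> T"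
  shows "(cps g ps has_real_derivative cps g (dcps S T g ps) x) (at x)"
  using assms(1)
proof (induction ps)
  case Nil
  then show ?case by (simp add: cps_def dcps_def)
next
  case (Cons p ps)
  obtain a b where p: "p = (a,b)" by force
  have ab: "sm T a" "sm S b" using Cons.prems p by auto
  have ga: "((\<lambda>x. a (g x)) has_real_derivative dsm T a (g x) * dsm S g x) (at x)"
    using DERIV_chain2[OF dsm(1)[OF ab(1), rule_format, OF assms(4)[rule_format, OF assms(2)]]
       dsm(1)[OF assms(3), rule_format, OF assms(2)]] .
  have d1: "((\<lambda>x. a (g x) * b x) has_real_derivative
      (dsm T a (g x) * dsm S g x) * b x + dsm S b x * a (g x)) (at x)"
    by (rule DERIV_mult[OF ga dsm(1)[OF ab(2), rule_format, OF assms(2)]])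
  have d2: "(cps g ps has_real_derivative cps g (dcps S T g ps) x) (at x)"
    using Cons by auto
  have "((\<lambda>x. a (g x) * b x + cps g ps x) has_real_derivative
      ((dsm T a (g x) * dsm S g x) * b x + dsm S b x * a (g x)) + cps g (dcps S T g ps) x) (at x)"
    by (rule DERIV_add[OF d1 d2])
  then show ?case by (simp add: cps_def dcps_def p algebra_simps)
qed

lemma dcps_sm: "\<forall>(a,b)\<in>set ps. sm T a \<and> sm S b \<Longrightarrow> sm S g \<Longrightarrow> \<forall>(a,b)\<in>set (dcps S T g ps). sm T a \<and> sm S b"
  by (auto simp: dcps_def dsm sm_mult)

lemma sm_compose:
  assumes "sm T h" "sm S g" "\<forall>x\<in>S. g x \<in> T"
  shows "sm S (\<lambda>x. h (g x))"
proof -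
  have "sm S (cps g [(h, \<lambda>x. 1)])"
  apply (rule sm.coinduct[where X="\<lambda>f. \<exists>ps. f = cps g ps \<and> (\<forall>(a,b)\<in>set ps. sm T a \<and> sm S b)"])
  using assms apply (auto simp: sm_const)[1]
  subgoal for f
    apply (elim exE conjE)
    subgoal for qs
      apply (rule exI[of _ f], rule exI[of _ "cps g (dcps S T g qs)"])
      using cps_deriv[of qs T S _ g] dcps_sm[of qs T S g] assms by blast
    done
  done
  then show ?thesis by (simp add: cps_def[abs_def])
qed

lemma sm_exp: "sm S exp"
  apply (rule sm.coinduct[where X="\<lambda>f. f = exp"])
   apply simp
  apply (auto intro!: DERIV_exp)
  done

lemma sm_powr: "sm {0<..} (\<lambda>x. c * x powr r)"
  apply (rule sm.coinduct[where X="\<lambda>f. \<exists>c r. f = (\<lambda>x. c * x powr r)"])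
   apply blast
  apply (elim exE)
  subgoal for f c r
    apply (rule exI[of _ f], rule exI[of _ "\<lambda>x. (c*r) * x powr (r - 1)"])
    apply (intro conjI)
      apply simp
    subgoal using DERIV_cmult[OF has_real_derivative_powr] by (auto simp: mult.assoc)
    apply (rule disjI1)
    apply (rule exI[of _ "c*r"], rule exI[of _ "r-1"])
    by simp
  done

lemma sm_ln: "sm {0<..} ln"
proof (rule smI[where g'="\<lambda>x. 1 * x powr (-1)"])
  show "\<forall>x\<in>{0<..}. (ln has_real_derivative 1 * x powr (-1)) (at x)"
    using DERIV_ln_divide by (simp add: powr_neg_one)
  show "sm {0<..} (\<lambda>x. 1 * x powr (-1))" by (rule sm_powr)
qed

lemma sm_differentiable: "sm S g \<Longrightarrow> x \<in> S \<Longrightarrow> g differentiable (at x)"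
  using dsm(1) real_differentiable_def by blast

lemma sm_deriv: assumes "open S" "sm S g" shows "sm S (deriv g)"
  using sm_cong[OF assms(1) dsm(2)[OF assms(2)]] dsm(1)[OF assms(2)] DERIV_imp_deriv by metis

lemma sm_smooth1: assumes "open S" "sm S g" shows "smooth1_on S g"
proof -
  have "sm S ((deriv ^^ k) g)" for k
    by (induction k) (auto simp: assms sm_deriv)
  then show ?thesis unfolding smooth1_on_def using sm_differentiable by blast
qed

lemma smooth1_sm: assumes "smooth1_on S g" shows "sm S g"
  apply (rule sm.coinduct[where X="\<lambda>f. \<exists>k. f = (deriv ^^ k) g"])
   apply (rule exI[of _ 0], simp)
  apply (elim exE)
  subgoal for f k
    apply (rule exI[of _ f], rule exI[of _ "(deriv ^^ Suc k) g"])
    using assms unfolding smooth1_on_def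
    apply (intro conjI)
      apply simp
     apply (simp add: DERIV_deriv_iff_real_differentiable[symmetric])
    apply (rule disjI1, rule exI[of _ "Suc k"])
    by simp
  done


section \<open>Two variables\<close>

lemma chain_gen:
  assumes "(F has_derivative D) (at (a x, b x))" "(a has_real_derivative a') (at x)"
    "(b has_real_derivative b') (at x)"
  shows "((\<lambda>t. F (a t, b t)) has_real_derivative D (a', b')) (at x)"
proof -
  have lin: "linear D" using has_derivative_bounded_linear[OF assms(1)] bounded_linear.linear by blast
  have p: "((\<lambda>t. (a t, b t)) has_derivative (\<lambda>h. (a' * h, b' * h))) (at x)"
    using has_derivative_Pair[OF assms(2)[unfolded has_field_derivative_def]
        assms(3)[unfolded has_field_derivative_def]] by (simp add: mult.commute)
  have "((F \<circ> (\<lambda>t. (a t, b t))) has_derivative (D \<circ> (\<lambda>h. (a' * h, b' * h)))) (at x)"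
    by (rule diff_chain_at[OF p assms(1)])
  moreover have "(D \<circ> (\<lambda>h. (a' * h, b' * h))) = (\<lambda>h. D (a', b') * h)"
  proof
    fix h
    have "(a' * h, b' * h) = h *\<^sub>R (a', b')" by (simp add: mult.commute)
    then show "(D \<circ> (\<lambda>h. (a' * h, b' * h))) h = D (a', b') * h"
      using linear_scale[OF lin, of h "(a', b')"] by (simp add: mult.commute)
  qed
  ultimately have "((F \<circ> (\<lambda>t. (a t, b t))) has_derivative (\<lambda>h. D (a', b') * h)) (at x)"
    by (simp only:)
  then show ?thesis unfolding has_field_derivative_def comp_def .
qed

lemma chain2:
  assumes "F differentiable (at (a x, b x))" "(a has_real_derivative a') (at x)"
    "(b has_real_derivative b') (at x)"
  shows "((\<lambda>t. F (a t, b t)) has_real_derivative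
           pX F (a x, b x) * a' + pPhi F (a x, b x) * b') (at x)"
proof -
  obtain D where D: "(F has_derivative D) (at (a x, b x))"
    using assms(1) unfolding differentiable_def by blast
  have lin: "linear D" using has_derivative_bounded_linear[OF D] bounded_linear.linear by blast
  have h1: "((\<lambda>t. F (t, b x)) has_real_derivative D (1, 0)) (at (a x))"
    using chain_gen[of F D "\<lambda>t. t" "a x" "\<lambda>t. b x", OF _ DERIV_ident DERIV_const] D by simp
  have "pX F (a x, b x) = D (1, 0)"
    unfolding pX_def using DERIV_imp_deriv[OF h1] by simp
  moreover
  have h2: "((\<lambda>t. F (a x, t)) has_real_derivative D (0, 1)) (at (b x))"
    using chain_gen[of F D "\<lambda>t. a x" "b x" "\<lambda>t. t", OF _ DERIV_const DERIV_ident] D by simp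
  have "pPhi F (a x, b x) = D (0, 1)"
    unfolding pPhi_def using DERIV_imp_deriv[OF h2] by simp
  moreover have "D (a', b') = a' * D (1, 0) + b' * D (0, 1)"
  proof -
    have "(a', b') = a' *\<^sub>R (1, 0) + b' *\<^sub>R (0, 1)" by simp
    then have "D (a', b') = D (a' *\<^sub>R (1, 0)) + D (b' *\<^sub>R (0, 1))"
      by (simp only: linear_add[OF lin])
    also have "\<dots> = a' *\<^sub>R D (1, 0) + b' *\<^sub>R D (0, 1)"
      by (simp only: linear_scale[OF lin])
    finally show ?thesis by simp
  qed
  ultimately show ?thesis using chain_gen[OF D assms(2,3)] by (simp add: mult.commute)
qed

lemma pX_deriv: assumes "F differentiable (at z)"
  shows "((\<lambda>t. F (t, snd z)) has_real_derivative pX F z) (at (fst z))"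
  using chain2[of F "\<lambda>t. t" "fst z" "\<lambda>t. snd z" 1 0] assms by auto

lemma pPhi_deriv: assumes "F differentiable (at z)"
  shows "((\<lambda>t. F (fst z, t)) has_real_derivative pPhi F z) (at (snd z))"
  using chain2[of F "\<lambda>t. fst z" "snd z" "\<lambda>t. t" 0 1] assms by auto

lemma pX_cong:
  assumes "open S" "z \<in> S" "\<forall>w\<in>S. f w = g w"
  shows "pX f z = pX g z"
proof -
  have o: "open ((\<lambda>t. (t, snd z)) -` S)"
    by (rule continuous_open_vimage[OF assms(1)]) (intro continuous_intros)
  have "eventually (\<lambda>t. t \<in> (\<lambda>t. (t, snd z)) -` S) (nhds (fst z))"
    by (rule eventually_nhds_in_open[OF o]) (use assms(2) in simp)
  then have "eventually (\<lambda>t. f (t, snd z) = g (t, snd z)) (nhds (fst z))"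
    by eventually_elim (use assms(3) in auto)
  then show ?thesis unfolding pX_def by (rule deriv_cong_ev) simp
qed

lemma pPhi_cong:
  assumes "open S" "z \<in> S" "\<forall>w\<in>S. f w = g w"
  shows "pPhi f z = pPhi g z"
proof -
  have o: "open ((\<lambda>t. (fst z, t)) -` S)"
    by (rule continuous_open_vimage[OF assms(1)]) (intro continuous_intros)
  have "eventually (\<lambda>t. t \<in> (\<lambda>t. (fst z, t)) -` S) (nhds (snd z))"
    by (rule eventually_nhds_in_open[OF o]) (use assms(2) in simp)
  then have "eventually (\<lambda>t. f (fst z, t) = g (fst z, t)) (nhds (snd z))"
    by eventually_elim (use assms(3) in auto)
  then show ?thesis unfolding pPhi_def by (rule deriv_cong_ev) simp
qed

lemma diff_cong:
  assumes "open S" "z \<in> S" "f differentiable (at z)" "\<forall>w\<in>S. f w = g w"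
  shows "g differentiable (at z)"
  using assms unfolding differentiable_def by (metis has_derivative_transform_within_open)

coinductive sm2 :: "(real \<times> real) set \<Rightarrow> (real \<times> real \<Rightarrow> real) \<Rightarrow> bool" for S where
  sm2I: "\<forall>z\<in>S. F differentiable (at z) \<Longrightarrow> sm2 S (pX F) \<Longrightarrow> sm2 S (pPhi F) \<Longrightarrow> sm2 S F"

lemma sm2_D: assumes "sm2 S F"
  shows "\<forall>z\<in>S. F differentiable (at z)" "sm2 S (pX F)" "sm2 S (pPhi F)"
  using assms by (cases rule: sm2.cases, auto)+

lemma smooth2_sm2: assumes "smooth2_on S F" shows "sm2 S F"
  apply (rule sm2.coinduct[where X="\<lambda>H. \<exists>ds. H = iter_pd ds F"])
   apply (rule exI[of _ "[]"], simp)
  apply (elim exE)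
  subgoal for H ds
    apply (rule exI[of _ H])
    apply (intro conjI)
       apply simp
    using assms unfolding smooth2_on_def apply blast
     apply (rule disjI1, rule exI[of _ "True # ds"], simp)
    apply (rule disjI1, rule exI[of _ "False # ds"], simp)
    done
  done

lemma sm2_smooth2: assumes "sm2 S F" shows "smooth2_on S F"
proof -
  have *: "sm2 S (iter_pd ds F)" for ds
    by (induction ds) (auto simp: assms sm2_D)
  show ?thesis unfolding smooth2_on_def
    using * sm2_D(1) by (metis continuous_at_imp_continuous_on differentiable_imp_continuous_within)
qed

lemma sm2_cong:
  assumes "open S" "sm2 S A" "\<forall>z\<in>S. A z = B z"
  shows "sm2 S B"
  apply (rule sm2.coinduct[where X="\<lambda>H. \<exists>A. sm2 S A \<and> (\<forall>z\<in>S. A z = H z)"])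
  using assms apply blast
  apply (elim exE conjE)
  subgoal for H A
    apply (rule exI[of _ H])
    apply (intro conjI)
       apply simp
    using diff_cong[OF assms(1)] sm2_D(1) apply blast
     apply (rule disjI1, rule exI[of _ "pX A"])
    using sm2_D pX_cong[OF assms(1)] apply blast
    apply (rule disjI1, rule exI[of _ "pPhi A"])
    using sm2_D pPhi_cong[OF assms(1)] apply blast
    done
  done


definition psum2 :: "((real \<times> real \<Rightarrow> real) \<times> (real \<times> real \<Rightarrow> real)) list \<Rightarrow> real \<times> real \<Rightarrow> real" where
  "psum2 ps z = sum_list (map (\<lambda>(a,b). a z * b z) ps)"

definition dX :: "((real \<times> real \<Rightarrow> real) \<times> (real \<times> real \<Rightarrow> real)) list \<Rightarrow> ((real \<times> real \<Rightarrow> real) \<times> (real \<times> real \<Rightarrow> real)) list" where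
  "dX ps = concat (map (\<lambda>(a,b). [(pX a, b), (a, pX b)]) ps)"

definition dP :: "((real \<times> real \<Rightarrow> real) \<times> (real \<times> real \<Rightarrow> real)) list \<Rightarrow> ((real \<times> real \<Rightarrow> real) \<times> (real \<times> real \<Rightarrow> real)) list" where
  "dP ps = concat (map (\<lambda>(a,b). [(pPhi a, b), (a, pPhi b)]) ps)"

lemma psum2_diff:
  assumes "\<forall>(a,b)\<in>set ps. sm2 S a \<and> sm2 S b" "z \<in> S"
  shows "psum2 ps differentiable (at z)"
  using assms(1)
proof (induction ps)
  case Nil
  then show ?case by (simp add: psum2_def[abs_def])
next
  case (Cons p ps)
  obtain a b where p: "p = (a,b)" by force
  have "(\<lambda>z. a z * b z + psum2 ps z) differentiable (at z)"
    using Cons p sm2_D(1) assms(2) by (auto intro!: differentiable_add differentiable_mult)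
  then show ?case by (simp add: psum2_def[abs_def] p)
qed

lemma psum2_pX:
  assumes "\<forall>(a,b)\<in>set ps. sm2 S a \<and> sm2 S b" "z \<in> S"
  shows "((\<lambda>t. psum2 ps (t, snd z)) has_real_derivative psum2 (dX ps) z) (at (fst z))"
  using assms(1)
proof (induction ps)
  case Nil
  then show ?case by (simp add: psum2_def dX_def)
next
  case (Cons p ps)
  obtain a b where p: "p = (a,b)" by force
  have ab: "sm2 S a" "sm2 S b" using Cons.prems p by auto
  have d1: "((\<lambda>t. a (t, snd z) * b (t, snd z)) has_real_derivative
      pX a z * b (fst z, snd z) + pX b z * a (fst z, snd z)) (at (fst z))"
    by (rule DERIV_mult[OF pX_deriv pX_deriv]) (use sm2_D(1)[OF ab(1)] sm2_D(1)[OF ab(2)] assms(2) in auto)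
  have d2: "((\<lambda>t. psum2 ps (t, snd z)) has_real_derivative psum2 (dX ps) z) (at (fst z))"
    using Cons by auto
  have "((\<lambda>t. a (t, snd z) * b (t, snd z) + psum2 ps (t, snd z)) has_real_derivative
      (pX a z * b (fst z, snd z) + pX b z * a (fst z, snd z)) + psum2 (dX ps) z) (at (fst z))"
    by (rule DERIV_add[OF d1 d2])
  then show ?case by (simp add: psum2_def dX_def p algebra_simps)
qed

lemma psum2_pPhi:
  assumes "\<forall>(a,b)\<in>set ps. sm2 S a \<and> sm2 S b" "z \<in> S"
  shows "((\<lambda>t. psum2 ps (fst z, t)) has_real_derivative psum2 (dP ps) z) (at (snd z))"
  using assms(1)
proof (induction ps)
  case Nil
  then show ?case by (simp add: psum2_def dP_def)
next
  case (Cons p ps)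
  obtain a b where p: "p = (a,b)" by force
  have ab: "sm2 S a" "sm2 S b" using Cons.prems p by auto
  have d1: "((\<lambda>t. a (fst z, t) * b (fst z, t)) has_real_derivative
      pPhi a z * b (fst z, snd z) + pPhi b z * a (fst z, snd z)) (at (snd z))"
    by (rule DERIV_mult[OF pPhi_deriv pPhi_deriv]) (use sm2_D(1)[OF ab(1)] sm2_D(1)[OF ab(2)] assms(2) in auto)
  have d2: "((\<lambda>t. psum2 ps (fst z, t)) has_real_derivative psum2 (dP ps) z) (at (snd z))"
    using Cons by auto
  have "((\<lambda>t. a (fst z, t) * b (fst z, t) + psum2 ps (fst z, t)) has_real_derivative
      (pPhi a z * b (fst z, snd z) + pPhi b z * a (fst z, snd z)) + psum2 (dP ps) z) (at (snd z))"
    by (rule DERIV_add[OF d1 d2])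
  then show ?case by (simp add: psum2_def dP_def p algebra_simps)
qed

lemma sm2_psum:
  assumes "open S" "\<forall>(a,b)\<in>set ps. sm2 S a \<and> sm2 S b"
  shows "sm2 S (psum2 ps)"
  apply (rule sm2.coinduct[where X="\<lambda>H. \<exists>ps. (\<forall>(a,b)\<in>set ps. sm2 S a \<and> sm2 S b) \<and> (\<forall>z\<in>S. psum2 ps z = H z)"])
  using assms apply blast
  apply (elim exE conjE)
  subgoal for H qs
    apply (rule exI[of _ H])
    apply (intro conjI)
       apply simp
    using diff_cong[OF assms(1)] psum2_diff apply blast
     apply (rule disjI1, rule exI[of _ "dX qs"], intro conjI)
    subgoal by (auto simp: dX_def sm2_D)
    subgoal
      using pX_cong[OF assms(1), of _ "psum2 qs" H] psum2_pX[of qs S] DERIV_imp_deriv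
      unfolding pX_def by metis
    apply (rule disjI1, rule exI[of _ "dP qs"], intro conjI)
    subgoal by (auto simp: dP_def sm2_D)
    subgoal
      using pPhi_cong[OF assms(1), of _ "psum2 qs" H] psum2_pPhi[of qs S] DERIV_imp_deriv
      unfolding pPhi_def by metis
    done
  done

lemma sm2_const: "sm2 S (\<lambda>z. c)"
proof -
  have e: "\<And>c. pX (\<lambda>z. c) = (\<lambda>z. 0)" "\<And>c. pPhi (\<lambda>z. c) = (\<lambda>z. 0)"
    by (auto simp: pX_def pPhi_def intro!: ext DERIV_imp_deriv)
  show ?thesis
    apply (rule sm2.coinduct[where X="\<lambda>H. \<exists>c. H = (\<lambda>z. c)"])
     apply blast
    apply (elim exE)
    subgoal for H c
      apply (rule exI[of _ H])
      using e by auto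
    done
qed



lemma sm2_mult: "open S \<Longrightarrow> sm2 S a \<Longrightarrow> sm2 S b \<Longrightarrow> sm2 S (\<lambda>z. a z * b z)"
  using sm2_psum[of S "[(a,b)]"] by (simp add: psum2_def[abs_def])

lemma sm2_add: "open S \<Longrightarrow> sm2 S a \<Longrightarrow> sm2 S b \<Longrightarrow> sm2 S (\<lambda>z. a z + b z)"
  using sm2_psum[of S "[(a,\<lambda>x. 1),(b,\<lambda>x. 1)]"] by (simp add: psum2_def[abs_def] sm2_const)

lemma sm2_liftPhi:
  assumes "open S" "\<forall>z\<in>S. snd z \<in> I" "open I" "sm I a"
  shows "sm2 S (\<lambda>z. a (snd z))"
  apply (rule sm2.coinduct[where X="\<lambda>H. \<exists>a. sm I a \<and> (\<forall>z\<in>S. H z = a (snd z))"])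
  using assms apply blast
  apply (elim exE conjE)
  subgoal for H b
  proof -
    assume b: "sm I b" "\<forall>z\<in>S. H z = b (snd z)"
    have dd: "(\<lambda>w. b (snd w)) differentiable (at z)" if "z \<in> S" for z
      using differentiable_compose[of b snd z UNIV, OF sm_differentiable[OF b(1)]
          bounded_linear_imp_differentiable[OF bounded_linear_snd]] assms(2) that by simp
    have px: "pX H z = 0" if "z \<in> S" for z
      using pX_cong[OF assms(1) that, of H "\<lambda>w. b (snd w)"] b(2)
      by (simp add: pX_def)
    have pp: "pPhi H z = dsm I b (snd z)" if "z \<in> S" for z
      using pPhi_cong[OF assms(1) that, of H "\<lambda>w. b (snd w)"] b(2) dsm(1)[OF b(1)] assms(2) that
      by (simp add: pPhi_def DERIV_imp_deriv)
    show ?thesis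
      apply (rule exI[of _ H], intro conjI)
         apply simp
      using diff_cong[OF assms(1)] dd b(2) apply (metis (no_types, lifting))
       apply (rule disjI1, rule exI[of _ "\<lambda>_. 0"]) using px sm_const apply simp
      apply (rule disjI1, rule exI[of _ "dsm I b"]) using pp dsm(2)[OF b(1)] by simp
  qed
  done

lemma sm2_liftX:
  assumes "open S" "\<forall>z\<in>S. fst z \<in> I" "open I" "sm I a"
  shows "sm2 S (\<lambda>z. a (fst z))"
  apply (rule sm2.coinduct[where X="\<lambda>H. \<exists>a. sm I a \<and> (\<forall>z\<in>S. H z = a (fst z))"])
  using assms apply blast
  apply (elim exE conjE)
  subgoal for H b
  proof -
    assume b: "sm I b" "\<forall>z\<in>S. H z = b (fst z)"
    have dd: "(\<lambda>w. b (fst w)) differentiable (at z)" if "z \<in> S" for z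
      using differentiable_compose[of b fst z UNIV, OF sm_differentiable[OF b(1)]
          bounded_linear_imp_differentiable[OF bounded_linear_fst]] assms(2) that by simp
    have pp: "pPhi H z = 0" if "z \<in> S" for z
      using pPhi_cong[OF assms(1) that, of H "\<lambda>w. b (fst w)"] b(2)
      by (simp add: pPhi_def)
    have px: "pX H z = dsm I b (fst z)" if "z \<in> S" for z
      using pX_cong[OF assms(1) that, of H "\<lambda>w. b (fst w)"] b(2) dsm(1)[OF b(1)] assms(2) that
      by (simp add: pX_def DERIV_imp_deriv)
    show ?thesis
      apply (rule exI[of _ H], intro conjI)
         apply simp
      using diff_cong[OF assms(1)] dd b(2) apply (metis (no_types, lifting))
       apply (rule disjI1, rule exI[of _ "dsm I b"]) using px dsm(2)[OF b(1)] apply simp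
      apply (rule disjI1, rule exI[of _ "\<lambda>_. 0"]) using pp sm_const by simp
  qed
  done

lemma sm_resX:
  assumes "sm2 D A" "\<forall>y>0. (c*y, p0) \<in> D"
  shows "sm {0<..} (\<lambda>y. k * A (c*y, p0))"
  apply (rule sm.coinduct[where X="\<lambda>g. \<exists>A k. sm2 D A \<and> g = (\<lambda>y. k * A (c*y, p0))"])
  using assms apply blast
  apply (elim exE conjE)
  subgoal for g B k
    apply (rule exI[of _ g], rule exI[of _ "\<lambda>y. (k*c) * pX B (c*y, p0)"])
    apply (intro conjI)
      apply simp
    subgoal premises prems
    proof
      fix y :: real assume "y \<in> {0<..}"
      then have y: "y > 0" by simp
      have a: "((\<lambda>y. c * y) has_real_derivative c) (at y)"
        using DERIV_cmult[OF DERIV_ident, where c=c] by simp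
      have "((\<lambda>t. B (c * t, p0)) has_real_derivative pX B (c * y, p0) * c + pPhi B (c * y, p0) * 0) (at y)"
        by (rule chain2[of B "\<lambda>y. c*y" y "\<lambda>y. p0", OF _ a DERIV_const])
          (use sm2_D(1)[of D B] prems assms(2) y in auto)
      then have "((\<lambda>t. k * B (c * t, p0)) has_real_derivative k * (pX B (c * y, p0) * c)) (at y)"
        by (intro DERIV_cmult) simp
      then show "(g has_real_derivative k * c * pX B (c * y, p0)) (at y)"
        using prems by (simp add: ac_simps)
    qed
    apply (rule disjI1, rule exI[of _ "pX B"], rule exI[of _ "k*c"])
    using sm2_D by auto
  done

lemma sm_resPhi:
  assumes "sm2 D A" "\<forall>p\<in>I. (x0, p) \<in> D"
  shows "sm I (\<lambda>p. k * A (x0, p))"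
  apply (rule sm.coinduct[where X="\<lambda>g. \<exists>A k. sm2 D A \<and> g = (\<lambda>p. k * A (x0, p))"])
  using assms apply blast
  apply (elim exE conjE)
  subgoal for g B k
    apply (rule exI[of _ g], rule exI[of _ "\<lambda>p. k * pPhi B (x0, p)"])
    apply (intro conjI)
      apply simp
    subgoal
      using pPhi_deriv[of B] sm2_D(1) assms(2)
      by (auto intro!: DERIV_cmult)
    apply (rule disjI1, rule exI[of _ "pPhi B"], rule exI[of _ "k"])
    using sm2_D by auto
  done


lemma sign_const:
  fixes h :: "real \<Rightarrow> real"
  assumes "is_interval I" "continuous_on I h" "\<forall>x\<in>I. h x \<noteq> 0"
  shows "(\<forall>x\<in>I. h x > 0) \<or> (\<forall>x\<in>I. h x < 0)"
proof (rule ccontr)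
  assume "\<not> ?thesis"
  then obtain a b where ab0: "a \<in> I" "\<not> h a > 0" "b \<in> I" "\<not> h b < 0" by auto
  then have ab: "h a < 0" "h b > 0" using assms(3) by force+
  have "connected (h ` I)"
    using connected_continuous_image[OF assms(2)] is_interval_connected[OF assms(1)] by blast
  then have "is_interval (h ` I)" by (simp add: is_interval_connected_1)
  then have "0 \<in> h ` I" unfolding is_interval_1 using ab ab0
    by (metis imageI less_imp_le)
  then show False using assms(3) by auto
qed

lemma sm_cont: "sm S g \<Longrightarrow> continuous_on S g"
  by (meson continuous_at_imp_continuous_on differentiable_imp_continuous_within sm_differentiable)

lemma rhoX:
  assumes "sm2 D L" "z \<in> D"
  shows "pX (\<lambda>z. 2 * fst z * pX L z - L z) z = pX L z + 2 * fst z * pX (pX L) z"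
proof -
  have dL: "L differentiable (at z)" and dLX: "pX L differentiable (at z)"
    using sm2_D assms by blast+
  have a: "((\<lambda>t. 2 * t) has_real_derivative 2) (at (fst z))"
    using DERIV_cmult[OF DERIV_ident, of 2] by simp
  have b: "((\<lambda>t. 2 * t * pX L (t, snd z)) has_real_derivative
       2 * pX L (fst z, snd z) + pX (pX L) z * (2 * fst z)) (at (fst z))"
    using DERIV_mult[OF a pX_deriv[OF dLX]] by simp
  have "((\<lambda>t. 2 * t * pX L (t, snd z) - L (t, snd z)) has_real_derivative
        (2 * pX L (fst z, snd z) + pX (pX L) z * (2 * fst z)) - pX L z) (at (fst z))"
    by (rule DERIV_diff[OF b pX_deriv[OF dL]])
  then show ?thesis unfolding pX_def[of "\<lambda>z. 2 * fst z * pX L z - L z"]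
    by (simp add: DERIV_imp_deriv pX_def[symmetric])
qed

lemma rhoP:
  assumes "sm2 D L" "z \<in> D"
  shows "pPhi (\<lambda>z. 2 * fst z * pX L z - L z) z = 2 * fst z * pPhi (pX L) z - pPhi L z"
proof -
  have dL: "L differentiable (at z)" and dLX: "pX L differentiable (at z)"
    using sm2_D assms by blast+
  have "((\<lambda>t. 2 * fst z * pX L (fst z, t) - L (fst z, t)) has_real_derivative
        2 * fst z * pPhi (pX L) z - pPhi L z) (at (snd z))"
    by (rule DERIV_diff[OF DERIV_cmult[OF pPhi_deriv[OF dLX]] pPhi_deriv[OF dL]])
  then show ?thesis unfolding pPhi_def[of "\<lambda>z. 2 * fst z * pX L z - L z"]
    by (simp add: DERIV_imp_deriv)
qed

lemma sqrt2_deriv: "t > 0 \<Longrightarrow> ((\<lambda>t. sqrt (2 * t)) has_real_derivative 1 / sqrt (2 * t)) (at t)"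
proof -
  assume t: "t > 0"
  have "((\<lambda>t. sqrt (2 * t)) has_real_derivative inverse (sqrt (2 * t)) / 2 * 2) (at t)"
  proof -
    have a: "((\<lambda>t. 2 * t) has_real_derivative 2) (at t)"
      using DERIV_cmult[OF DERIV_ident, where c=2] by simp
    show ?thesis using DERIV_chain2[OF DERIV_real_sqrt[of "2*t"] a] t by simp
  qed
  then show ?thesis by (simp add: field_simps)
qed


lemma forward:
  fixes I :: "real set" and L :: "real \<times> real \<Rightarrow> real"
  assumes I_open: "open I" and I_interval: "is_interval I" and I_ne: "I \<noteq> {}"
    and L_smooth: "smooth2_on ({0<..} \<times> I) L"
    and L_X_nz: "\<forall>z\<in>{0<..} \<times> I. pX L z \<noteq> 0"
    and isn: "isentropic_n I L n"
  shows "\<exists>f G \<sigma>. field_redef I L f G \<and> \<sigma> \<in> {1, -1} \<and>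
              (\<forall>X>0. \<forall>\<phi>\<in>I.
                 n (X, \<phi>) = \<sigma> * exp (f \<phi>) * sqrt (2 * X) * pX L (X, \<phi>) \<and>
                 - pPhi L (X, \<phi>) = 2 * X * pX L (X, \<phi>) * deriv f \<phi> \<and>
                 n (X, \<phi>) = \<sigma> * sqrt (2 * (exp (- 2 * f \<phi>) * X))
                              * deriv G (exp (- 2 * f \<phi>) * X))"
proof -
  define D where "D = {0::real<..} \<times> I"
  have oD: "open D" unfolding D_def by (intro open_Times I_open) simp
  have memD: "\<And>X p. (X, p) \<in> D \<longleftrightarrow> X > 0 \<and> p \<in> I" by (simp add: D_def)
  have smL: "sm2 D L" using smooth2_sm2 L_smooth D_def by simp
  have smLX: "sm2 D (pX L)" using sm2_D(2)[OF smL] .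
  have dL: "\<And>z. z \<in> D \<Longrightarrow> L differentiable (at z)" using sm2_D(1)[OF smL] by blast
  have dLX: "\<And>z. z \<in> D \<Longrightarrow> pX L differentiable (at z)" using sm2_D(1)[OF smLX] by blast
  have LXnz: "\<And>z. z \<in> D \<Longrightarrow> pX L z \<noteq> 0" using L_X_nz unfolding D_def by blast
  have smn: "sm2 D n" and nnz: "\<And>z. z \<in> D \<Longrightarrow> n z \<noteq> 0"
   and eqX: "\<And>z. z \<in> D \<Longrightarrow> pX (\<lambda>z. 2 * fst z * pX L z - L z) z = (2 * fst z * pX L z - L z + L z) * pX n z / n z"
   and eqP: "\<And>z. z \<in> D \<Longrightarrow> pPhi (\<lambda>z. 2 * fst z * pX L z - L z) z = (2 * fst z * pX L z - L z + L z) * pPhi n z / n z"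
    using isn unfolding isentropic_n_def Let_def D_def[symmetric] by (auto simp: smooth2_sm2)
  have dn: "\<And>z. z \<in> D \<Longrightarrow> n differentiable (at z)" using sm2_D(1)[OF smn] by blast

  define q where "q = (\<lambda>z. n z / (sqrt (2 * fst z) * pX L z))"
  have qconst: "q (X, p) = q (1, p)" if "X > 0" "p \<in> I" for X p
  proof -
    have der: "((\<lambda>t. q (t, p)) has_real_derivative 0) (at t)" if t: "t > 0" for t
    proof -
      define z where "z = (t, p)"
      have zD: "z \<in> D" using t \<open>p\<in>I\<close> memD z_def by simp
      define nX where "nX = pX n z"
      define nn where "nn = n z"
      define LX where "LX = pX L z"
      define LXX where "LXX = pX (pX L) z"
      define s where "s = sqrt (2*t)"
      have s_pos: "s > 0" using t s_def by simp
      have ss: "s * s = 2 * t" using t s_def by simp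
      have e: "nX * (2 * t * LX) = nn * (LX + 2 * t * LXX)"
        using eqX[OF zD] rhoX[OF smL zD] nnz[OF zD] unfolding nX_def nn_def LX_def LXX_def z_def
        by (simp add: field_simps)
      have d1: "((\<lambda>t. n (t, p)) has_real_derivative nX) (at t)"
        using pX_deriv[OF dn[OF zD]] unfolding nX_def z_def by simp
      have dLX': "((\<lambda>t. pX L (t, p)) has_real_derivative LXX) (at t)"
        using pX_deriv[OF dLX[OF zD]] unfolding z_def LXX_def by simp
      have d2: "((\<lambda>t. sqrt (2*t) * pX L (t, p)) has_real_derivative (1/s) * LX + LXX * s) (at t)"
        using DERIV_mult[OF sqrt2_deriv[OF t] dLX']
        unfolding s_def LX_def LXX_def z_def by simp
      have d3: "((\<lambda>t. n (t, p) / (sqrt (2*t) * pX L (t, p))) has_real_derivative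
          (nX * (s * LX) - nn * ((1/s) * LX + LXX * s)) / ((s * LX) * (s * LX))) (at t)"
        using DERIV_divide[OF d1 d2] s_pos LXnz[OF zD]
        unfolding s_def LX_def nn_def z_def by simp
      have "(nX * (s * LX) - nn * ((1/s) * LX + LXX * s)) * s
           = nX * LX * (s * s) - nn * LX * ((1/s) * s) - nn * LXX * (s * s)"
        by (simp add: algebra_simps)
      also have "\<dots> = nX * (2 * t * LX) - nn * (LX + 2 * t * LXX)"
        using ss s_pos by (simp add: algebra_simps)
      finally have "nX * (s * LX) - nn * ((1/s) * LX + LXX * s) = 0"
        using e s_pos by simp
      then show ?thesis using d3 unfolding q_def by simp
    qed
    have "\<exists>c. \<forall>t\<in>{0<..}. q (t, p) = c"
      by (rule has_field_derivative_zero_constant) (auto intro: has_field_derivative_at_within der)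
    then show ?thesis using that by auto
  qed
  have cn: "continuous_on I (\<lambda>p. n (1, p))"
    using sm_cont[OF sm_resPhi[OF smn, of I 1 1]] memD by simp
  have cl: "continuous_on I (\<lambda>p. pX L (1, p))"
    using sm_cont[OF sm_resPhi[OF smLX, of I 1 1]] memD by simp
  obtain s1 where s1: "s1 \<in> {1, -1}" "\<forall>p\<in>I. s1 * n (1, p) > 0"
  proof -
    have "(\<forall>p\<in>I. n (1, p) > 0) \<or> (\<forall>p\<in>I. n (1, p) < 0)"
      by (rule sign_const[OF I_interval cn]) (use nnz memD in auto)
    then show ?thesis using that[of 1] that[of "-1"] by auto
  qed
  obtain s2 where s2: "s2 \<in> {1, -1}" "\<forall>p\<in>I. s2 * pX L (1, p) > 0"
  proof -
    have "(\<forall>p\<in>I. pX L (1, p) > 0) \<or> (\<forall>p\<in>I. pX L (1, p) < 0)"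
      by (rule sign_const[OF I_interval cl]) (use LXnz memD in auto)
    then show ?thesis using that[of 1] that[of "-1"] by auto
  qed
  define f where "f = (\<lambda>p. ln (s1 * n (1, p)) - ln (s2 * pX L (1, p)) - ln (sqrt 2))"
  define \<sigma> where "\<sigma> = s1 * s2"
  have \<sigma>: "\<sigma> \<in> {1, -1}" using s1(1) s2(1) \<sigma>_def by auto
  have expf: "\<sigma> * exp (f p) = q (1, p)" if "p \<in> I" for p
  proof -
    have a: "s1 * n (1, p) > 0" "s2 * pX L (1, p) > 0" using s1 s2 that by auto
    have "exp (f p) = (s1 * n (1, p)) / (s2 * pX L (1, p)) / sqrt 2"
      using a unfolding f_def by (simp add: exp_diff)
    then show ?thesis using s1(1) s2(1) a unfolding \<sigma>_def q_def by (auto simp: field_simps)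
  qed
  have nform: "n (X, p) = \<sigma> * exp (f p) * sqrt (2 * X) * pX L (X, p)" if "X > 0" "p \<in> I" for X p
  proof -
    have "pX L (X, p) \<noteq> 0" using LXnz memD that by simp
    moreover have "sqrt (2 * X) \<noteq> 0" using that by simp
    ultimately have "n (X, p) = q (X, p) * sqrt (2 * X) * pX L (X, p)" unfolding q_def by simp
    then show ?thesis using qconst[OF that] expf[OF that(2)] by simp
  qed
  have smf: "sm I f"
  proof -
    have a: "sm I (\<lambda>p. ln (s1 * n (1, p)))"
      using sm_compose[OF sm_ln sm_resPhi[OF smn, of I 1 s1]] s1(2) memD by simp
    have b: "sm I (\<lambda>p. ln (s2 * pX L (1, p)))"
      using sm_compose[OF sm_ln sm_resPhi[OF smLX, of I 1 s2]] s2(2) memD by simp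
    show ?thesis unfolding f_def by (intro sm_diff a b sm_const)
  qed
  have df: "\<And>p. p \<in> I \<Longrightarrow> (f has_real_derivative deriv f p) (at p)"
    using sm_differentiable[OF smf] DERIV_deriv_iff_real_differentiable by blast
  have nformD: "\<forall>w\<in>D. n w = \<sigma> * exp (f (snd w)) * sqrt (2 * fst w) * pX L w"
  proof
    fix w assume "w \<in> D"
    then obtain a b where w: "w = (a, b)" "a > 0" "b \<in> I" using memD by (cases w) auto
    then show "n w = \<sigma> * exp (f (snd w)) * sqrt (2 * fst w) * pX L w" using nform by simp
  qed
  have LP: "- pPhi L (X, p) = 2 * X * pX L (X, p) * deriv f p" if "X > 0" "p \<in> I" for X p
  proof -
    define z where "z = (X, p)"
    have zD: "z \<in> D" using that memD z_def by simp
    define e where "e = exp (f p)"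
    define s where "s = sqrt (2 * X)"
    define LX where "LX = pX L z"
    define LXP where "LXP = pPhi (pX L) z"
    define f' where "f' = deriv f p"
    have pn: "pPhi n z = \<sigma> * s * (e * f' * LX + e * LXP)"
    proof -
      have "pPhi n z = pPhi (\<lambda>w. \<sigma> * exp (f (snd w)) * sqrt (2 * fst w) * pX L w) z"
        by (rule pPhi_cong[OF oD zD nformD])
      also have "\<dots> = deriv (\<lambda>t. (\<sigma> * s) * (exp (f t) * pX L (X, t))) p"
        unfolding pPhi_def z_def s_def by (simp add: ac_simps)
      also have "\<dots> = (\<sigma> * s) * (e * f' * LX + LXP * e)"
      proof (rule DERIV_imp_deriv, rule DERIV_cmult)
        have e1: "((\<lambda>t. exp (f t)) has_real_derivative e * f') (at p)"
          unfolding e_def f'_def by (rule DERIV_chain2[OF DERIV_exp df[OF that(2)]])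
        show "((\<lambda>t. exp (f t) * pX L (X, t)) has_real_derivative e * f' * LX + LXP * e) (at p)"
        proof -
          have dLP: "((\<lambda>t. pX L (X, t)) has_real_derivative LXP) (at p)"
            using pPhi_deriv[OF dLX[OF zD]] unfolding z_def LXP_def by simp
          show ?thesis using DERIV_mult[OF e1 dLP] unfolding z_def LX_def LXP_def e_def by simp
        qed
      qed
      finally show ?thesis by (simp add: algebra_simps)
    qed
    have nz: "n z = \<sigma> * e * s * LX" using nform[OF that] unfolding z_def e_def s_def LX_def by simp
    have K: "\<sigma> * e * s * LX \<noteq> 0" using \<sigma> LXnz[OF zD] that unfolding e_def s_def LX_def by auto
    have E: "2 * X * LXP - pPhi L z = 2 * X * LX * (\<sigma> * s * (e * f' * LX + e * LXP)) / (\<sigma> * e * s * LX)"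
      using eqP[OF zD] rhoP[OF smL zD] pn nz unfolding z_def LX_def LXP_def by simp
    have "2 * X * LX * (\<sigma> * s * (e * f' * LX + e * LXP)) = (2 * X * f' * LX + 2 * X * LXP) * (\<sigma> * e * s * LX)"
      by (simp add: algebra_simps)
    then have "2 * X * LXP - pPhi L z = 2 * X * f' * LX + 2 * X * LXP" using E K by simp
    then show ?thesis unfolding z_def LX_def f'_def by (simp add: algebra_simps)
  qed
  obtain p0 where p0: "p0 \<in> I" using I_ne by blast
  define c where "c = exp (2 * f p0)"
  define G where "G = (\<lambda>Y. L (c * Y, p0))"
  have kconst: "L (exp (2 * f p) * Y, p) = L (exp (2 * f p0) * Y, p0)" if "Y > 0" "p \<in> I" for Y p
  proof -
    have der: "((\<lambda>t. L (exp (2 * f t) * Y, t)) has_real_derivative 0) (at r)" if r: "r \<in> I" for r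
    proof -
      define Xr where "Xr = exp (2 * f r) * Y"
      have Xr: "Xr > 0" using \<open>Y > 0\<close> Xr_def by simp
      have a: "((\<lambda>t. exp (2 * f t) * Y) has_real_derivative exp (2 * f r) * (2 * deriv f r) * Y) (at r)"
        by (rule DERIV_cmult_right[OF DERIV_chain2[OF DERIV_exp DERIV_cmult[OF df[OF r]]]])
      have "((\<lambda>t. L (exp (2 * f t) * Y, t)) has_real_derivative
          pX L (Xr, r) * (exp (2 * f r) * (2 * deriv f r) * Y) + pPhi L (Xr, r) * 1) (at r)"
        using chain2[of L "\<lambda>t. exp (2 * f t) * Y" r "\<lambda>t. t", OF _ a DERIV_ident] dL[of "(Xr, r)"]
          memD Xr r unfolding Xr_def by simp
      moreover have "pX L (Xr, r) * (exp (2 * f r) * (2 * deriv f r) * Y) + pPhi L (Xr, r) * 1 = 0"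
        using LP[OF Xr r] unfolding Xr_def by (simp add: algebra_simps)
      ultimately show ?thesis by simp
    qed
    have "\<exists>k. \<forall>t\<in>I. L (exp (2 * f t) * Y, t) = k"
      by (rule has_field_derivative_zero_constant)
        (use I_interval is_interval_convex_1 in \<open>auto intro: has_field_derivative_at_within der\<close>)
    then show ?thesis using that p0 by auto
  qed
  have ee: "exp (2 * f p) * (exp (- 2 * f p) * X) = X" for p X
  proof -
    have "exp (2 * f p) * exp (- 2 * f p) = 1" by (simp add: exp_minus[symmetric] exp_add[symmetric])
    then show ?thesis by (simp add: mult.assoc[symmetric])
  qed
  have Lform: "L (X, p) = G (exp (- 2 * f p) * X)" if "X > 0" "p \<in> I" for X p
  proof -
    have "L (exp (2 * f p) * (exp (- 2 * f p) * X), p) = L (exp (2 * f p0) * (exp (- 2 * f p) * X), p0)"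
      by (rule kconst) (use that in simp_all)
    then show ?thesis unfolding G_def c_def ee .
  qed
  have smG: "sm {0<..} G"
    using sm_resX[OF smL, of c p0 1] p0 memD unfolding G_def c_def by simp
  have dG: "deriv G (exp (- 2 * f p) * X) = exp (2 * f p) * pX L (X, p)" if "X > 0" "p \<in> I" for X p
  proof -
    define Y where "Y = exp (- 2 * f p) * X"
    have Y: "Y > 0" using that Y_def by simp
    have id: "exp (2 * f p) * Y = X" using ee Y_def by simp
    have Geq: "\<forall>y\<in>{0<..}. L (exp (2 * f p) * y, p) = G y"
      using kconst that unfolding G_def c_def by simp
    have "((\<lambda>y. L (exp (2 * f p) * y, p)) has_real_derivative
           pX L (X, p) * exp (2 * f p) + pPhi L (X, p) * 0) (at Y)"
      using chain2[of L "\<lambda>y. exp (2 * f p) * y" Y "\<lambda>y. p", OF _ DERIV_cmult[OF DERIV_ident] DERIV_const]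
        id dL[of "(X, p)"] memD that by simp
    then have "(G has_real_derivative pX L (X, p) * exp (2 * f p)) (at Y)"
      using has_field_derivative_transform_within_open[of _ _ Y "{0<..}" G] Geq Y by simp
    then show ?thesis unfolding Y_def using DERIV_imp_deriv by (simp add: mult.commute)
  qed
  have final: "n (X, p) = \<sigma> * sqrt (2 * (exp (- 2 * f p) * X)) * deriv G (exp (- 2 * f p) * X)"
    if "X > 0" "p \<in> I" for X p
  proof -
    have m: "- 2 * f p = - f p + - f p" by simp
    have "2 * (exp (- 2 * f p) * X) = (exp (- f p))\<^sup>2 * (2 * X)"
      unfolding m exp_add power2_eq_square by (simp add: algebra_simps)
    then have "sqrt (2 * (exp (- 2 * f p) * X)) = sqrt ((exp (- f p))\<^sup>2 * (2 * X))"
      by (rule arg_cong)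
    also have "\<dots> = exp (- f p) * sqrt (2 * X)" by (simp only: real_sqrt_mult real_sqrt_abs) simp
    finally have sq: "sqrt (2 * (exp (- 2 * f p) * X)) = exp (- f p) * sqrt (2 * X)" .
    have m2: "2 * f p = f p + f p" by simp
    have "exp (- f p) * exp (2 * f p) = exp (f p)"
      unfolding m2 exp_add by (simp add: exp_minus field_simps)
    then show ?thesis using nform[OF that] dG[OF that] sq
      by (simp add: algebra_simps)
  qed
  show ?thesis
    apply (rule exI[of _ f], rule exI[of _ G], rule exI[of _ \<sigma>])
    apply (intro conjI)
    subgoal unfolding field_redef_def
      using sm_smooth1[OF I_open smf] sm_smooth1[OF _ smG] Lform by simp
    subgoal using \<sigma> .
    using nform LP final by blast
qed


lemma backward:
  fixes I :: "real set" and L :: "real \<times> real \<Rightarrow> real"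
  assumes I_open: "open I"
    and L_smooth: "smooth2_on ({0<..} \<times> I) L"
    and L_X_nz: "\<forall>z\<in>{0<..} \<times> I. pX L z \<noteq> 0"
    and fr: "field_redef I L f G"
  shows "\<exists>n. isentropic_n I L n"
proof -
  define D where "D = {0::real<..} \<times> I"
  have oD: "open D" unfolding D_def by (intro open_Times I_open) simp
  have memD: "\<And>X p. (X, p) \<in> D \<longleftrightarrow> X > 0 \<and> p \<in> I" by (simp add: D_def)
  have smL: "sm2 D L" using smooth2_sm2 L_smooth D_def by simp
  have smLX: "sm2 D (pX L)" using sm2_D(2)[OF smL] .
  have dL: "\<And>z. z \<in> D \<Longrightarrow> L differentiable (at z)" using sm2_D(1)[OF smL] by blast
  have dLX: "\<And>z. z \<in> D \<Longrightarrow> pX L differentiable (at z)" using sm2_D(1)[OF smLX] by blast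
  have LXnz: "\<And>z. z \<in> D \<Longrightarrow> pX L z \<noteq> 0" using L_X_nz unfolding D_def by blast
  have smf: "sm I f" and smG: "sm {0<..} G" and LG: "\<forall>X>0. \<forall>p\<in>I. L (X, p) = G (exp (- 2 * f p) * X)"
    using fr smooth1_sm unfolding field_redef_def by auto
  have df: "\<And>p. p \<in> I \<Longrightarrow> (f has_real_derivative deriv f p) (at p)"
    using sm_differentiable[OF smf] DERIV_deriv_iff_real_differentiable by blast
  have dG: "\<And>y. y > 0 \<Longrightarrow> (G has_real_derivative deriv G y) (at y)"
    using sm_differentiable[OF smG] DERIV_deriv_iff_real_differentiable by auto
  have LGD: "\<forall>w\<in>D. L w = G (exp (- 2 * f (snd w)) * fst w)"
  proof
    fix w assume "w \<in> D"
    then obtain a b where w: "w = (a, b)" "a > 0" "b \<in> I" using memD by (cases w) auto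
    then show "L w = G (exp (- 2 * f (snd w)) * fst w)" using LG by simp
  qed
  define n where "n = (\<lambda>z. exp (f (snd z)) * sqrt (2 * fst z) * pX L z)"
  have smn: "sm2 D n"
  proof -
    have a: "sm2 D (\<lambda>z. exp (f (snd z)))"
      using sm2_liftPhi[OF oD _ I_open sm_compose[OF sm_exp[of UNIV] smf]] by (auto simp: D_def)
    have sq: "sm {0<..} (\<lambda>x. sqrt (2 * x))"
      by (rule sm_cong[OF open_greaterThan sm_powr[of "sqrt 2" "1/2"]])
        (auto simp: powr_half_sqrt real_sqrt_mult)
    have b: "sm2 D (\<lambda>z. sqrt (2 * fst z))"
      using sm2_liftX[OF oD _ open_greaterThan sq] by (auto simp: D_def)
    show ?thesis unfolding n_def by (rule sm2_mult[OF oD sm2_mult[OF oD a b] smLX])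
  qed
  have pL: "pX L (X, p) = deriv G (exp (- 2 * f p) * X) * exp (- 2 * f p) \<and>
            pPhi L (X, p) = - 2 * X * deriv f p * pX L (X, p)" if "X > 0" "p \<in> I" for X p
  proof -
    define z where "z = (X, p)"
    have zD: "z \<in> D" using that memD z_def by simp
    define e where "e = exp (- 2 * f p)"
    define g' where "g' = deriv G (e * X)"
    have eX: "e * X > 0" using that e_def by simp
    have "pX L z = pX (\<lambda>w. G (exp (- 2 * f (snd w)) * fst w)) z"
      by (rule pX_cong[OF oD zD LGD])
    also have "\<dots> = deriv (\<lambda>t. G (e * t)) X" unfolding pX_def z_def e_def by simp
    also have "\<dots> = g' * (e * 1)"
      unfolding g'_def by (rule DERIV_imp_deriv[OF DERIV_chain2[OF dG[OF eX] DERIV_cmult[OF DERIV_ident]]])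
    finally have px: "pX L z = g' * e" by simp
    have "pPhi L z = pPhi (\<lambda>w. G (exp (- 2 * f (snd w)) * fst w)) z"
      by (rule pPhi_cong[OF oD zD LGD])
    also have "\<dots> = deriv (\<lambda>t. G (exp (- 2 * f t) * X)) p" unfolding pPhi_def z_def by simp
    also have "\<dots> = g' * (e * (- 2 * deriv f p) * X)"
    proof -
      have i: "((\<lambda>t. exp (- 2 * f t) * X) has_real_derivative e * (- 2 * deriv f p) * X) (at p)"
        unfolding e_def
        by (rule DERIV_cmult_right[OF DERIV_chain2[OF DERIV_exp DERIV_cmult[OF df[OF that(2)]]]])
      show ?thesis unfolding g'_def e_def
        using DERIV_imp_deriv[OF DERIV_chain2[OF dG[OF eX[unfolded e_def]] i[unfolded e_def]]] by simp
    qed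
    finally have pp: "pPhi L z = g' * (e * (- 2 * deriv f p) * X)" .
    show ?thesis using px pp unfolding z_def g'_def e_def by (simp add: algebra_simps)
  qed
  have eqs: "pX (\<lambda>z. 2 * fst z * pX L z - L z) z = (2 * fst z * pX L z) * pX n z / n z \<and>
        pPhi (\<lambda>z. 2 * fst z * pX L z - L z) z = (2 * fst z * pX L z) * pPhi n z / n z"
    if zD: "z \<in> D" for z
  proof -
    obtain X p where z: "z = (X, p)" by (cases z)
    have X: "X > 0" and p: "p \<in> I" using zD z memD by auto
    define e where "e = exp (f p)"
    define s where "s = sqrt (2 * X)"
    define LX where "LX = pX L z"
    define LXX where "LXX = pX (pX L) z"
    define LXP where "LXP = pPhi (pX L) z"
    define f' where "f' = deriv f p"
    have e0: "e > 0" using e_def by simp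
    have s0: "s > 0" using s_def X by simp
    have ss: "s * s = 2 * X" using s_def X by simp
    have LX0: "LX \<noteq> 0" using LXnz[OF zD] LX_def by simp
    have nz: "n z = e * s * LX" unfolding n_def z e_def s_def LX_def by simp
    have dLX': "((\<lambda>t. pX L (t, p)) has_real_derivative LXX) (at X)"
      using pX_deriv[OF dLX[OF zD]] unfolding z LXX_def by simp
    have dLP: "((\<lambda>t. pX L (X, t)) has_real_derivative LXP) (at p)"
      using pPhi_deriv[OF dLX[OF zD]] unfolding z LXP_def by simp
    have pnX: "pX n z = e * ((1 / s) * LX + LXX * s)"
    proof -
      have "pX n z = deriv (\<lambda>t. e * (sqrt (2 * t) * pX L (t, p))) X"
        unfolding pX_def n_def z e_def by (simp add: mult.assoc)
      also have "\<dots> = e * ((1 / s) * LX + LXX * s)"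
        using DERIV_imp_deriv[OF DERIV_cmult[OF DERIV_mult[OF sqrt2_deriv[OF X] dLX']]]
        unfolding s_def LX_def z by simp
      finally show ?thesis .
    qed
    have pnP: "pPhi n z = s * (e * f' * LX + LXP * e)"
    proof -
      have e1: "((\<lambda>t. exp (f t)) has_real_derivative e * f') (at p)"
        unfolding e_def f'_def by (rule DERIV_chain2[OF DERIV_exp df[OF p]])
      have "pPhi n z = deriv (\<lambda>t. s * (exp (f t) * pX L (X, t))) p"
        unfolding pPhi_def n_def z s_def by (simp add: ac_simps)
      also have "\<dots> = s * (e * f' * LX + LXP * e)"
        using DERIV_imp_deriv[OF DERIV_cmult[OF DERIV_mult[OF e1 dLP]]]
        unfolding LX_def z e_def by simp
      finally show ?thesis .
    qed
    have lp: "pPhi L z = - 2 * X * f' * LX" using pL[OF X p] unfolding z f'_def LX_def by simp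
    have A: "pX (\<lambda>z. 2 * fst z * pX L z - L z) z = (2 * fst z * pX L z) * pX n z / n z"
    proof -
      have "(2 * X * LX) * (e * ((1 / s) * LX + LXX * s)) / (e * s * LX) = (2 * X / s) * ((1 / s) * LX + LXX * s)"
        using e0 s0 LX0 by (simp add: field_simps)
      also have "2 * X / s = s" using ss s0 by (simp add: field_simps)
      also have "s * ((1 / s) * LX + LXX * s) = LX + 2 * X * LXX" using ss s0
        by (simp add: algebra_simps)
      finally show ?thesis using rhoX[OF smL zD] pnX nz unfolding z LX_def LXX_def by simp
    qed
    have B: "pPhi (\<lambda>z. 2 * fst z * pX L z - L z) z = (2 * fst z * pX L z) * pPhi n z / n z"
    proof -
      have "(2 * X * LX) * (s * (e * f' * LX + LXP * e)) / (e * s * LX) = 2 * X * LXP - (- 2 * X * f' * LX)"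
        using e0 s0 LX0 by (simp add: field_simps)
      then show ?thesis using rhoP[OF smL zD] pnP nz lp unfolding z LX_def LXP_def by simp
    qed
    show ?thesis using A B by simp
  qed
  have "isentropic_n I L n"
    unfolding isentropic_n_def Let_def D_def[symmetric]
  proof (intro conjI ballI)
    show "smooth2_on D n" using sm2_smooth2[OF smn] .
    fix z assume zD: "z \<in> D"
    obtain X p where z: "z = (X, p)" by (cases z)
    have X: "X > 0" using zD z memD by auto
    show "n z \<noteq> 0" using LXnz[OF zD] X unfolding n_def z by simp
  next
    fix z assume zD: "z \<in> D"
    then show "pX (\<lambda>z. 2 * fst z * pX L z - L z) z =
          (2 * fst z * pX L z - L z + L z) * pX n z / n z" using eqs by simp
  next
    fix z assume zD: "z \<in> D"
    then show "pPhi (\<lambda>z. 2 * fst z * pX L z - L z) z =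
          (2 * fst z * pX L z - L z + L z) * pPhi n z / n z" using eqs by simp
  qed
  then show ?thesis by blast
qed

theorem mainTheorem1:
  fixes I :: "real set" and L :: "real \<times> real \<Rightarrow> real"
  assumes I_open: "open I" and I_interval: "is_interval I" and I_ne: "I \<noteq> {}"
    and L_smooth: "smooth2_on ({0<..} \<times> I) L"
    and L_X_nz: "\<forall>z\<in>{0<..} \<times> I. pX L z \<noteq> 0"
  shows "((\<exists>n. isentropic_n I L n) \<longleftrightarrow> (\<exists>f G. field_redef I L f G)) \<and>
         (\<forall>n. isentropic_n I L n \<longrightarrow>
           (\<exists>f G \<sigma>. field_redef I L f G \<and> \<sigma> \<in> {1, -1} \<and>
              (\<forall>X>0. \<forall>\<phi>\<in>I.
                 n (X, \<phi>) = \<sigma> * exp (f \<phi>) * sqrt (2 * X) * pX L (X, \<phi>) \<and>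
                 - pPhi L (X, \<phi>) = 2 * X * pX L (X, \<phi>) * deriv f \<phi> \<and>
                 n (X, \<phi>) = \<sigma> * sqrt (2 * (exp (- 2 * f \<phi>) * X))
                              * deriv G (exp (- 2 * f \<phi>) * X))))"
  proof -
  have eq: "(\<exists>n. isentropic_n I L n) \<longleftrightarrow> (\<exists>f G. field_redef I L f G)"
  proof
    assume "\<exists>n. isentropic_n I L n"
    then obtain n where "isentropic_n I L n" by blast
    from forward[OF I_open I_interval I_ne L_smooth L_X_nz this] show "\<exists>f G. field_redef I L f G" by blast
  next
    assume "\<exists>f G. field_redef I L f G"
    then obtain f G where "field_redef I L f G" by blast
    from backward[OF I_open L_smooth L_X_nz this] show "\<exists>n. isentropic_n I L n" .
  qed
  show ?thesis
    using eq forward[OF I_open I_interval I_ne L_smooth L_X_nz] by blast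
qed

end
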